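(* Let $U_2$ be a unitary matrix with real entries having a unique (up to scalars) eigenvector $|\phi_0\rangle$ of eigenvalue $1$, chosen with real entries and norm $1$; let $|\mu\rangle$ be a unit vector with real entries, $U_1=I-2|\mu\rangle\langle\mu|$ and $U=U_2U_1$. Let $\varepsilon\in(0,1)$. For every $T\ge\max\{1,\mathsf{QHT}_\varepsilon(U_2,|\mu\rangle)\}$, the procedure $\mathbf{MainDetect}(U_2,|\mu\rangle,1/T,\varepsilon)$ accepts $|\phi_0\rangle$ with probability $1-O(\varepsilon)$ if $\langle\phi_0|\mu\rangle\ne0$, and accepts with probability $0$ otherwise.
   Context: Let $|\tilde\phi_0\rangle=|\phi_0\rangle-\langle\mu|\phi_0\rangle|\mu\rangle$, decomposed in eigenvectors of $U$ as $|\tilde\phi_0\rangle=\delta_0|w_0\rangle+\sum_j\delta_j(|w_j^+\rangle+|w_j^-\rangle)+\delta_{-1}|w_{-1}\rangle$ with real coefficients ($|w_0\rangle,|w_{-1}\rangle$ unit eigenvectors of eigenvalues $\pm1$; $|w_j^\pm\rangle$ unit eigenvectors of eigenvalues $e^{\pm i\alpha_j}$, $0<\alpha_j<\pi$, $|w_j^-\rangle=\overline{|w_j^+\rangle}$). $\mathit{QH}$ takes value $1/\alpha_j$ with probability $2\delta_j^2$, $1/\pi$ with probability $\delta_{-1}^2$, and $0$ otherwise; $\mathsf{QHT}_\varepsilon(U_2,|\mu\rangle)=\min\{y:\Pr[\mathit{QH}>y]\le\varepsilon\}$. $\mathbf{Estimate}$ is the standard phase estimation circuit for $U$ with precision $\Delta$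 (outputs an eigenphase within $\Delta$ with error probability at most $1/3$, outputs $0$ with certainty on $1$-eigenvectors, uses $O(1/\Delta)$ calls to $\text{c-}U$ and its inverse). $\mathbf{Detect}(U,\Delta,\varepsilon)$: apply $\Theta(\log(1/\varepsilon))$ times $\mathbf{Estimate}$ with precision $\Delta$ to the same input state; accept iff at least one estimated phase is nonzero. $\mathbf{MainDetect}(U_2,|\mu\rangle,\Delta,\varepsilon)$ on input $|\psi\rangle$: measure according to the decomposition $(|\mu\rangle,|\mu\rangle^\perp)$; if the outcome is $|\mu\rangle$, accept; otherwise apply $\mathbf{Detect}(U,\Delta,\varepsilon)$ to the resulting state. *)

theory Defs
  imports "HOL-Probability.Probability"
begin

text \<open>Finite-dimensional linear algebra on C^n, with vectors represented as
  functions nat => complex and n x n matrices as nat => nat => complex;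
  only indices below n are meaningful.\<close>

definition cinner :: "nat \<Rightarrow> (nat \<Rightarrow> complex) \<Rightarrow> (nat \<Rightarrow> complex) \<Rightarrow> complex" where
  "cinner n u v = (\<Sum>i<n. cnj (u i) * v i)"

definition cnorm2 :: "nat \<Rightarrow> (nat \<Rightarrow> complex) \<Rightarrow> real" where
  "cnorm2 n v = (\<Sum>i<n. (cmod (v i))\<^sup>2)"

definition mat_vec :: "nat \<Rightarrow> (nat \<Rightarrow> nat \<Rightarrow> complex) \<Rightarrow> (nat \<Rightarrow> complex) \<Rightarrow> (nat \<Rightarrow> complex)" where
  "mat_vec n A v = (\<lambda>i. \<Sum>j<n. A i j * v j)"

definition mat_mult :: "nat \<Rightarrow> (nat \<Rightarrow> nat \<Rightarrow> complex) \<Rightarrow> (nat \<Rightarrow> nat \<Rightarrow> complex) \<Rightarrow> (nat \<Rightarrow> nat \<Rightarrow> complex)" where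
  "mat_mult n A B = (\<lambda>i j. \<Sum>k<n. A i k * B k j)"

definition unitary_mat :: "nat \<Rightarrow> (nat \<Rightarrow> nat \<Rightarrow> complex) \<Rightarrow> bool" where
  "unitary_mat n A \<longleftrightarrow> (\<forall>i<n. \<forall>j<n. (\<Sum>k<n. cnj (A k i) * A k j) = (if i = j then 1 else 0))"

definition real_mat :: "nat \<Rightarrow> (nat \<Rightarrow> nat \<Rightarrow> complex) \<Rightarrow> bool" where
  "real_mat n A \<longleftrightarrow> (\<forall>i<n. \<forall>j<n. Im (A i j) = 0)"

definition real_vec :: "nat \<Rightarrow> (nat \<Rightarrow> complex) \<Rightarrow> bool" where
  "real_vec n v \<longleftrightarrow> (\<forall>i<n. Im (v i) = 0)"

definition reflection :: "(nat \<Rightarrow> complex) \<Rightarrow> (nat \<Rightarrow> nat \<Rightarrow> complex)" where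
  "reflection mu = (\<lambda>i j. (if i = j then 1 else 0) - 2 * mu i * cnj (mu j))"

definition perp_part :: "nat \<Rightarrow> (nat \<Rightarrow> complex) \<Rightarrow> (nat \<Rightarrow> complex) \<Rightarrow> (nat \<Rightarrow> complex)" where
  "perp_part n mu phi = (\<lambda>i. phi i - cinner n mu phi * mu i)"

definition orthonormal_eigenbasis ::
  "nat \<Rightarrow> (nat \<Rightarrow> nat \<Rightarrow> complex) \<Rightarrow> (nat \<Rightarrow> nat \<Rightarrow> complex) \<Rightarrow> (nat \<Rightarrow> real) \<Rightarrow> bool" where
  "orthonormal_eigenbasis n U w \<theta> \<longleftrightarrow>
     (\<forall>k<n. \<forall>l<n. cinner n (w k) (w l) = (if k = l then 1 else 0)) \<and>
     (\<forall>k<n. -pi < \<theta> k \<and> \<theta> k \<le> pi \<and> (\<forall>i<n. mat_vec n U (w k) i = cis (\<theta> k) * w k i))"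

definition phase_dist :: "real \<Rightarrow> real \<Rightarrow> real" where
  "phase_dist a b = \<bar>Arg (cis (a - b))\<bar>"

text \<open>Value of the random variable QH on an eigenvector of eigenphase theta:
  1/alpha for eigenvalues e^{+-i alpha} (alpha in (0,pi]), 0 for eigenvalue 1.\<close>
definition QH_val :: "real \<Rightarrow> real" where
  "QH_val t = (if t = 0 then 0 else 1 / \<bar>t\<bar>)"

text \<open>Pr[QH > y], where the probability of an eigenvector component equals the
  squared modulus of the coefficient of |phi~_0> on it.\<close>
definition QH_tail ::
  "nat \<Rightarrow> (nat \<Rightarrow> nat \<Rightarrow> complex) \<Rightarrow> (nat \<Rightarrow> complex) \<Rightarrow> (nat \<Rightarrow> complex)
     \<Rightarrow> (nat \<Rightarrow> nat \<Rightarrow> complex) \<Rightarrow> (nat \<Rightarrow> real) \<Rightarrow> real \<Rightarrow> real" where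
  "QH_tail n U2 mu phi0 w \<theta> y =
     (\<Sum>k<n. if QH_val (\<theta> k) > y then (cmod (cinner n (w k) (perp_part n mu phi0)))\<^sup>2 else 0)"

text \<open>QHT_eps(U2, mu) = min { y : Pr[QH > y] <= eps } (QH is nonnegative, so y ranges over y >= 0).\<close>
definition QHT ::
  "nat \<Rightarrow> (nat \<Rightarrow> nat \<Rightarrow> complex) \<Rightarrow> (nat \<Rightarrow> complex) \<Rightarrow> (nat \<Rightarrow> complex)
     \<Rightarrow> (nat \<Rightarrow> nat \<Rightarrow> complex) \<Rightarrow> (nat \<Rightarrow> real) \<Rightarrow> real \<Rightarrow> real" where
  "QHT n U2 mu phi0 w \<theta> \<epsilon> = Inf {y. 0 \<le> y \<and> QH_tail n U2 mu phi0 w \<theta> y \<le> \<epsilon>}"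

text \<open>Abstract model of Estimate with precision Delta: on an eigenvector of U of
  eigenphase theta it leaves the eigenvector untouched and produces an output
  phase distributed according to est theta.\<close>
definition valid_estimate :: "real \<Rightarrow> (real \<Rightarrow> real pmf) \<Rightarrow> bool" where
  "valid_estimate \<Delta> est \<longleftrightarrow>
     (\<forall>t. -pi < t \<and> t \<le> pi \<longrightarrow> measure_pmf.prob (est t) {y. phase_dist y t < \<Delta>} \<ge> 2/3) \<and>
     est 0 = return_pmf 0"

text \<open>Acceptance probability of Detect (m repetitions of Estimate on the same
  register; accept iff some output is nonzero) applied to the (unnormalised)
  state v: ||v||^2 - sum_k |<w_k|v>|^2 Pr[est(theta_k) = 0]^m.\<close>
definition detect_accept ::
  "nat \<Rightarrow> (nat \<Rightarrow> nat \<Rightarrow> complex) \<Rightarrow> (nat \<Rightarrow> real) \<Rightarrow> (real \<Rightarrow> real pmf) \<Rightarrow> nat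
     \<Rightarrow> (nat \<Rightarrow> complex) \<Rightarrow> real" where
  "detect_accept n w \<theta> est m v =
     cnorm2 n v - (\<Sum>k<n. (cmod (cinner n (w k) v))\<^sup>2 * (pmf (est (\<theta> k)) 0) ^ m)"

text \<open>Acceptance probability of MainDetect on input phi: measure in (mu, mu^perp);
  outcome mu (probability |<mu|phi>|^2) accepts; otherwise Detect is run on the
  normalised post-measurement state, which contributes
  ||phi~||^2 * detect(phi~/||phi~||) = detect_accept(phi~) by homogeneity.\<close>
definition main_detect_accept ::
  "nat \<Rightarrow> (nat \<Rightarrow> complex) \<Rightarrow> (nat \<Rightarrow> nat \<Rightarrow> complex) \<Rightarrow> (nat \<Rightarrow> real) \<Rightarrow> (real \<Rightarrow> real pmf)
     \<Rightarrow> nat \<Rightarrow> (nat \<Rightarrow> complex) \<Rightarrow> real" where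
  "main_detect_accept n mu w \<theta> est m phi =
     (cmod (cinner n mu phi))\<^sup>2 + detect_accept n w \<theta> est m (perp_part n mu phi)"

end

theory Submission
  imports Defs "Jordan_Normal_Form.Determinant"
begin

lemma orth_complete:
  assumes orth: "\<forall>k<n. \<forall>l<n. cinner n (w k) (w l) = (if k = l then 1 else 0)"
    and ij: "i<n" "j<n"
  shows "(\<Sum>k<n. w k i * cnj (w k j)) = (if i = j then 1 else 0)"
proof -
  define W where "W = mat n n (\<lambda>(i,k). w k i)"
  define V where "V = mat n n (\<lambda>(k,i). cnj (w k i))"
  have W: "W \<in> carrier_mat n n" and V: "V \<in> carrier_mat n n" by (auto simp: W_def V_def)
  have "V * W = 1\<^sub>m n"
  proof (rule eq_matI)
    fix k l assume kl: "k < dim_row (1\<^sub>m n)" "l < dim_col (1\<^sub>m n)"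
    have "(V * W) $$ (k, l) = (\<Sum>i<n. cnj (w k i) * w l i)"
      using kl by (simp add: W_def V_def scalar_prod_def atLeast0LessThan)
    also have "\<dots> = cinner n (w k) (w l)" by (simp add: cinner_def)
    finally show "(V * W) $$ (k, l) = 1\<^sub>m n $$ (k, l)" using kl orth by auto
  qed (auto simp: W_def V_def)
  hence "W * V = 1\<^sub>m n" using mat_mult_left_right_inverse[OF V W] by auto
  hence "(W * V) $$ (i, j) = (if i = j then 1 else 0)" using ij by auto
  moreover have "(W * V) $$ (i, j) = (\<Sum>k<n. w k i * cnj (w k j))"
    using ij by (simp add: W_def V_def scalar_prod_def atLeast0LessThan)
  ultimately show ?thesis by simp
qed

lemma expand:
  assumes orth: "\<forall>k<n. \<forall>l<n. cinner n (w k) (w l) = (if k = l then 1 else 0)" and i: "i<n"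
  shows "v i = (\<Sum>l<n. cinner n (w l) v * w l i)"
proof -
  have "(\<Sum>l<n. cinner n (w l) v * w l i) = (\<Sum>l<n. \<Sum>j<n. cnj (w l j) * v j * w l i)"
    by (simp add: cinner_def sum_distrib_right)
  also have "\<dots> = (\<Sum>j<n. v j * (\<Sum>l<n. w l i * cnj (w l j)))"
    by (subst sum.swap) (simp add: sum_distrib_left mult_ac)
  also have "\<dots> = (\<Sum>j<n. v j * (if i = j then 1 else 0))"
    using orth_complete[OF orth i] by simp
  also have "\<dots> = v i" using i by (simp add: if_distrib sum.delta cong: if_cong)
  finally show ?thesis by simp
qed

lemma parseval:
  assumes orth: "\<forall>k<n. \<forall>l<n. cinner n (w k) (w l) = (if k = l then 1 else 0)"
  shows "cnorm2 n v = (\<Sum>l<n. (cmod (cinner n (w l) v))\<^sup>2)"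
proof -
  have "complex_of_real (\<Sum>l<n. (cmod (cinner n (w l) v))\<^sup>2) = (\<Sum>l<n. cinner n (w l) v * cnj (cinner n (w l) v))"
    by (simp only: of_real_sum complex_norm_square)
  also have "\<dots> = (\<Sum>l<n. \<Sum>j<n. cnj (w l j) * v j * cnj (cinner n (w l) v))"
    by (simp add: cinner_def sum_distrib_right)
  also have "\<dots> = (\<Sum>j<n. v j * cnj (\<Sum>l<n. cinner n (w l) v * w l j))"
    by (subst sum.swap) (simp add: sum_distrib_left mult_ac)
  also have "\<dots> = (\<Sum>j<n. v j * cnj (v j))"
    using expand[OF orth, of _ v] by simp
  also have "\<dots> = complex_of_real (cnorm2 n v)"
    by (simp only: cnorm2_def of_real_sum complex_norm_square)
  finally show ?thesis using of_real_eq_iff by metis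
qed

lemma eigen_coeff:
  assumes orth: "\<forall>k<n. \<forall>l<n. cinner n (w k) (w l) = (if k = l then 1 else 0)"
    and eig: "\<forall>k<n. \<forall>i<n. mat_vec n U (w k) i = cis (\<theta> k) * w k i"
    and fix1: "\<forall>i<n. mat_vec n U v i = v i" and k: "k < n"
  shows "cinner n (w k) v * cis (\<theta> k) = cinner n (w k) v"
proof -
  have mv: "mat_vec n U v i = (\<Sum>l<n. cinner n (w l) v * cis (\<theta> l) * w l i)" if i: "i < n" for i
  proof -
    have "mat_vec n U v i = (\<Sum>j<n. U i j * (\<Sum>l<n. cinner n (w l) v * w l j))"
      unfolding mat_vec_def using expand[OF orth, of _ v] by (intro sum.cong) auto
    also have "\<dots> = (\<Sum>l<n. cinner n (w l) v * (\<Sum>j<n. U i j * w l j))"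
      by (simp add: sum_distrib_left sum_distrib_right mult_ac) (rule sum.swap)
    also have "\<dots> = (\<Sum>l<n. cinner n (w l) v * cis (\<theta> l) * w l i)"
      using eig i by (intro sum.cong) (auto simp: mat_vec_def)
    finally show ?thesis .
  qed
  have "cinner n (w k) v = cinner n (w k) (mat_vec n U v)"
    unfolding cinner_def using fix1 by (intro sum.cong) auto
  also have "\<dots> = (\<Sum>i<n. cnj (w k i) * (\<Sum>l<n. cinner n (w l) v * cis (\<theta> l) * w l i))"
    using mv by (simp add: cinner_def[of n "w k"])
  also have "\<dots> = (\<Sum>i<n. \<Sum>l<n. (cinner n (w l) v * cis (\<theta> l)) * (cnj (w k i) * w l i))"
    by (simp add: sum_distrib_left mult_ac)
  also have "\<dots> = (\<Sum>l<n. (cinner n (w l) v * cis (\<theta> l)) * (\<Sum>i<n. cnj (w k i) * w l i))"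
    by (subst sum.swap) (simp add: sum_distrib_left)
  also have "\<dots> = (\<Sum>l<n. cinner n (w l) v * cis (\<theta> l) * cinner n (w k) (w l))"
    by (simp add: cinner_def[of n "w k"])
  also have "\<dots> = (\<Sum>l<n. if l = k then cinner n (w l) v * cis (\<theta> l) else 0)"
    using orth k by (intro sum.cong) auto
  also have "\<dots> = cinner n (w k) v * cis (\<theta> k)" using k by simp
  finally show ?thesis by simp
qed

lemma cinner_cnj: "cinner n u v = cnj (cinner n v u)"
  by (simp add: cinner_def mult.commute)

lemma mv_mult: "mat_vec n (mat_mult n A B) v i = mat_vec n A (mat_vec n B v) i"
proof -
  have "mat_vec n (mat_mult n A B) v i = (\<Sum>j<n. \<Sum>k<n. A i k * (B k j * v j))"
    by (simp add: mat_vec_def mat_mult_def sum_distrib_right sum_distrib_left mult_ac)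
  also have "\<dots> = (\<Sum>k<n. \<Sum>j<n. A i k * (B k j * v j))" by (rule sum.swap)
  also have "\<dots> = mat_vec n A (mat_vec n B v) i"
    by (simp add: mat_vec_def sum_distrib_left)
  finally show ?thesis .
qed

lemma refl_apply:
  assumes "i < n"
  shows "mat_vec n (reflection mu) v i = v i - 2 * mu i * cinner n mu v"
proof -
  have "mat_vec n (reflection mu) v i = (\<Sum>j<n. (if i = j then v j else 0)) - (\<Sum>j<n. 2 * mu i * (cnj (mu j) * v j))"
  proof -
    have "\<And>j. reflection mu i j * v j = (if i = j then v j else 0) - 2 * mu i * (cnj (mu j) * v j)"
      by (simp add: reflection_def algebra_simps)
    thus ?thesis unfolding mat_vec_def by (simp only: sum_subtractf)
  qed
  also have "\<dots> = v i - 2 * mu i * cinner n mu v"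
    using assms by (simp add: cinner_def sum_distrib_left)
  finally show ?thesis .
qed

lemma adj_fix:
  assumes U: "unitary_mat n U" and fx: "\<forall>i<n. mat_vec n U phi i = phi i" and j: "j < n"
  shows "(\<Sum>k<n. cnj (U k j) * phi k) = phi j"
proof -
  have "(\<Sum>k<n. cnj (U k j) * phi k) = (\<Sum>k<n. cnj (U k j) * (\<Sum>l<n. U k l * phi l))"
    using fx by (intro sum.cong) (auto simp: mat_vec_def)
  also have "\<dots> = (\<Sum>l<n. (\<Sum>k<n. cnj (U k j) * U k l) * phi l)"
    by (simp add: sum_distrib_left sum_distrib_right mult_ac) (rule sum.swap)
  also have "\<dots> = (\<Sum>l<n. (if j = l then phi l else 0))"
    using U j by (intro sum.cong) (auto simp: unitary_mat_def)
  also have "\<dots> = phi j" using j by simp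
  finally show ?thesis .
qed

lemma inner_fix:
  assumes U: "unitary_mat n U" and fx: "\<forall>i<n. mat_vec n U phi i = phi i"
  shows "cinner n phi (mat_vec n U u) = cinner n phi u"
proof -
  have "cinner n phi (mat_vec n U u) = (\<Sum>i<n. \<Sum>j<n. cnj (phi i) * U i j * u j)"
    by (simp add: cinner_def mat_vec_def sum_distrib_left mult_ac)
  also have "\<dots> = (\<Sum>j<n. \<Sum>i<n. cnj (phi i) * U i j * u j)" by (rule sum.swap)
  also have "\<dots> = (\<Sum>j<n. cnj (\<Sum>i<n. cnj (U i j) * phi i) * u j)"
    by (simp add: sum_distrib_right sum_distrib_left mult_ac)
  also have "\<dots> = cinner n phi u"
    unfolding cinner_def using adj_fix[OF U fx] by (intro sum.cong) auto
  finally show ?thesis .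
qed

lemma no_one_eig:
  assumes U: "unitary_mat n U2" and fx: "\<forall>i<n. mat_vec n U2 phi0 i = phi0 i"
    and uniq: "\<forall>v. (\<forall>i<n. mat_vec n U2 v i = v i) \<longrightarrow> (\<exists>a. \<forall>i<n. v i = a * phi0 i)"
    and nz: "cinner n phi0 mu \<noteq> 0"
    and wn: "cinner n w w = 1"
    and we: "\<forall>i<n. mat_vec n (mat_mult n U2 (reflection mu)) w i = w i"
  shows False
proof -
  define a where "a = cinner n mu w"
  define u where "u = mat_vec n (reflection mu) w"
  have u: "\<And>i. i < n \<Longrightarrow> u i = w i - 2 * mu i * a"
    unfolding u_def a_def by (rule refl_apply)
  have Uu: "\<forall>i<n. mat_vec n U2 u i = w i" using we by (simp add: mv_mult u_def)
  have "cinner n phi0 w = cinner n phi0 (mat_vec n U2 u)"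
    unfolding cinner_def using Uu by (intro sum.cong) auto
  also have "\<dots> = cinner n phi0 u" by (rule inner_fix[OF U fx])
  also have "\<dots> = (\<Sum>i<n. cnj (phi0 i) * w i - 2 * a * (cnj (phi0 i) * mu i))"
    unfolding cinner_def by (intro sum.cong) (auto simp: u algebra_simps)
  also have "\<dots> = cinner n phi0 w - 2 * a * cinner n phi0 mu"
    by (simp add: cinner_def sum_subtractf sum_distrib_left)
  finally have "a * cinner n phi0 mu = 0" by simp
  hence a0: "a = 0" using nz by simp
  have "\<forall>i<n. mat_vec n U2 w i = w i"
  proof (intro allI impI)
    fix i assume "i < n"
    have "mat_vec n U2 w i = mat_vec n U2 u i"
      unfolding mat_vec_def using u a0 by (intro sum.cong) auto
    thus "mat_vec n U2 w i = w i" using Uu \<open>i<n\<close> by simp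
  qed
  then obtain b where b: "\<forall>i<n. w i = b * phi0 i" using uniq by blast
  have "a = b * cinner n mu phi0"
    unfolding a_def cinner_def using b by (simp add: sum_distrib_left mult_ac)
  moreover have "cinner n mu phi0 \<noteq> 0" using nz cinner_cnj[of n mu phi0] by auto
  ultimately have "b = 0" using a0 by simp
  hence "cinner n w w = 0" using b by (simp add: cinner_def)
  thus False using wn by simp
qed

lemma perp_norm:
  assumes mu: "cnorm2 n mu = 1"
  shows "cnorm2 n (perp_part n mu v) = cnorm2 n v - (cmod (cinner n mu v))\<^sup>2"
proof -
  define a where "a = cinner n mu v"
  have m1: "(\<Sum>i<n. mu i * cnj (mu i)) = 1"
  proof -
    have "(\<Sum>i<n. mu i * cnj (mu i)) = complex_of_real (cnorm2 n mu)"
      by (simp only: cnorm2_def of_real_sum complex_norm_square)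
    thus ?thesis using mu by simp
  qed
  have s1: "(\<Sum>i<n. v i * cnj (mu i)) = a"
    by (simp add: a_def cinner_def mult.commute)
  have s2: "(\<Sum>i<n. mu i * cnj (v i)) = cnj a"
    by (simp add: a_def cinner_def mult.commute)
  have "complex_of_real (cnorm2 n (perp_part n mu v))
      = (\<Sum>i<n. (v i - a * mu i) * cnj (v i - a * mu i))"
    by (simp only: cnorm2_def of_real_sum complex_norm_square perp_part_def a_def)
  also have "\<dots> = (\<Sum>i<n. v i * cnj (v i)) - cnj a * (\<Sum>i<n. v i * cnj (mu i))
       - a * (\<Sum>i<n. mu i * cnj (v i)) + a * cnj a * (\<Sum>i<n. mu i * cnj (mu i))"
    by (simp add: algebra_simps sum.distrib sum_subtractf sum_distrib_left)
  also have "\<dots> = (\<Sum>i<n. v i * cnj (v i)) - a * cnj a"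
    by (simp add: s1 s2 m1 algebra_simps)
  also have "\<dots> = complex_of_real (cnorm2 n v - (cmod a)\<^sup>2)"
    by (simp only: cnorm2_def of_real_sum complex_norm_square of_real_diff)
  finally show ?thesis unfolding a_def using of_real_eq_iff by metis
qed

lemma tail_le:
  fixes q p :: "nat \<Rightarrow> real"
  assumes p: "\<And>k. p k \<ge> 0" and e: "0 \<le> \<epsilon>"
    and T: "T \<ge> Inf {y. 0 \<le> y \<and> (\<Sum>k<n. if q k > y then p k else 0) \<le> \<epsilon>}"
  shows "(\<Sum>k<n. if q k > T then p k else 0) \<le> \<epsilon>"
proof (rule ccontr)
  define f where "f y = (\<Sum>k<n. if q k > y then p k else 0)" for y
  define S where "S = {y. 0 \<le> y \<and> f y \<le> \<epsilon>}"
  assume "\<not> ?thesis"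
  hence fT: "f T > \<epsilon>" by (simp add: f_def)
  define F where "F = q ` {k. k < n \<and> q k > T}"
  have Ffin: "finite F" by (simp add: F_def)
  have Fne: "F \<noteq> {}"
  proof
    assume "F = {}"
    hence "f T = 0" by (auto simp: F_def f_def intro!: sum.neutral)
    thus False using fT e by simp
  qed
  define y0 where "y0 = Min F"
  have y0T: "y0 > T" using Ffin Fne by (auto simp: y0_def F_def)
  have qy0: "\<And>k. k < n \<Longrightarrow> q k > T \<Longrightarrow> q k \<ge> y0"
    unfolding y0_def using Ffin by (auto simp: F_def)
  have Sbig: "y \<ge> y0" if "y \<in> S" for y
  proof (rule ccontr)
    assume "\<not> y \<ge> y0"
    hence yl: "y < y0" by simp
    have "(if q k > T then p k else 0) \<le> (if q k > y then p k else 0)" if "k < n" for k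
    proof (cases "q k > T")
      case True
      then have "q k > y" using qy0[OF that True] yl by linarith
      with True show ?thesis by simp
    next
      case False
      thus ?thesis using p by simp
    qed
    hence "f T \<le> f y" unfolding f_def by (intro sum_mono) auto
    thus False using fT that by (auto simp: S_def)
  qed
  define y1 where "y1 = (\<Sum>k<n. \<bar>q k\<bar>)"
  have "y1 \<in> S"
  proof -
    have "\<And>k. k < n \<Longrightarrow> q k \<le> y1"
    proof -
      fix k assume "k < n"
      hence "\<bar>q k\<bar> \<le> y1" unfolding y1_def by (intro member_le_sum) auto
      thus "q k \<le> y1" by simp
    qed
    hence "f y1 = 0" unfolding f_def
    proof (intro sum.neutral ballI)
      fix k assume "\<And>k. k < n \<Longrightarrow> q k \<le> y1" "k \<in> {..<n}"
      hence "\<not> q k > y1" by force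
      thus "(if q k > y1 then p k else 0) = 0" by simp
    qed
    moreover have "0 \<le> y1" unfolding y1_def by (simp add: sum_nonneg)
    ultimately show ?thesis using e by (simp add: S_def)
  qed
  hence "Inf S \<ge> y0" using Sbig by (intro cInf_greatest) auto
  moreover have "T \<ge> Inf S" using T by (simp add: S_def f_def)
  ultimately show False using y0T by simp
qed

lemma phase0:
  assumes "-pi < t" "t \<le> pi"
  shows "phase_dist 0 t = \<bar>t\<bar>"
proof (cases "t = pi")
  case True
  have c: "cis (-pi) = -1" by (simp add: complex_eq_iff)
  show ?thesis using Arg_cis[of pi] True c by (simp add: phase_dist_def)
next
  case False
  thus ?thesis using assms by (simp add: phase_dist_def Arg_cis)
qed

lemma est_small:
  assumes v: "valid_estimate D est" and t: "-pi < t" "t \<le> pi" and D: "\<bar>t\<bar> \<ge> D"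
  shows "pmf (est t) 0 \<le> 1/3"
proof -
  let ?A = "{y. phase_dist y t < D}"
  have A: "measure_pmf.prob (est t) ?A \<ge> 2/3" using v t by (simp add: valid_estimate_def)
  have "0 \<notin> ?A" using phase0[OF t] D by simp
  hence "measure_pmf.prob (est t) ({0} \<union> ?A) = measure_pmf.prob (est t) {0} + measure_pmf.prob (est t) ?A"
    by (intro measure_pmf.finite_measure_Union) auto
  moreover have "measure_pmf.prob (est t) ({0} \<union> ?A) \<le> 1" by (rule measure_pmf.prob_le_1)
  ultimately show ?thesis using A by (simp add: measure_pmf_single)
qed

lemma pow_small:
  fixes c \<epsilon> :: real
  assumes c: "c \<ge> 1" and e: "0 < \<epsilon>" "\<epsilon> < 1"
  shows "(1/3::real) ^ (nat \<lceil>c * ln (1 / \<epsilon>)\<rceil>) \<le> \<epsilon>"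
proof -
  define m where "m = nat \<lceil>c * ln (1 / \<epsilon>)\<rceil>"
  have l: "ln (1/\<epsilon>) > 0" using e by simp
  have "c * ln (1/\<epsilon>) \<ge> ln (1/\<epsilon>)" using c l by simp
  hence mge: "real m \<ge> ln (1/\<epsilon>)" unfolding m_def by linarith
  have b: "1/3 \<le> exp (-1::real)"
    using exp_le by (simp add: exp_minus field_simps)
  have "(1/3::real) ^ m \<le> exp (-1) ^ m" using b by (intro power_mono) auto
  also have "\<dots> = exp (- real m)" by (simp add: exp_of_nat_mult[symmetric])
  also have "\<dots> \<le> exp (- ln (1/\<epsilon>))" using mge by simp
  also have "\<dots> = \<epsilon>" using e by (simp add: ln_div exp_minus)
  finally show ?thesis unfolding m_def .
qed

lemma part2:
  assumes ob: "orthonormal_eigenbasis n (mat_mult n U2 (reflection mu)) w \<theta>"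
    and fx: "\<forall>i<n. mat_vec n U2 phi0 i = phi0 i" and z: "cinner n phi0 mu = 0"
    and e0: "est 0 = return_pmf 0"
  shows "main_detect_accept n mu w \<theta> est m phi0 = 0"
proof -
  from ob have orth: "\<forall>k<n. \<forall>l<n. cinner n (w k) (w l) = (if k = l then 1 else 0)"
    and eig: "\<forall>k<n. \<forall>i<n. mat_vec n (mat_mult n U2 (reflection mu)) (w k) i = cis (\<theta> k) * w k i"
    and th: "\<forall>k<n. -pi < \<theta> k \<and> \<theta> k \<le> pi"
    unfolding orthonormal_eigenbasis_def by auto
  have z': "cinner n mu phi0 = 0" using z cinner_cnj[of n mu phi0] by simp
  have pp: "perp_part n mu phi0 = phi0" by (simp add: perp_part_def z')
  have fU: "\<forall>i<n. mat_vec n (mat_mult n U2 (reflection mu)) phi0 i = phi0 i"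
  proof (intro allI impI)
    fix i assume i: "i < n"
    have "mat_vec n U2 (mat_vec n (reflection mu) phi0) i = mat_vec n U2 phi0 i"
      unfolding mat_vec_def[of n U2] by (intro sum.cong) (auto simp: refl_apply z')
    thus "mat_vec n (mat_mult n U2 (reflection mu)) phi0 i = phi0 i" using fx i by (simp add: mv_mult)
  qed
  have trm: "(cmod (cinner n (w k) phi0))\<^sup>2 * pmf (est (\<theta> k)) 0 ^ m = (cmod (cinner n (w k) phi0))\<^sup>2"
    if k: "k < n" for k
  proof (cases "\<theta> k = 0")
    case True
    thus ?thesis using e0 by simp
  next
    case False
    have "cis (\<theta> k) \<noteq> 1"
    proof
      assume "cis (\<theta> k) = 1"
      hence "Arg (cis (\<theta> k)) = 0" by simp
      moreover have "Arg (cis (\<theta> k)) = \<theta> k" using th k by (intro Arg_cis) auto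
      ultimately show False using False by simp
    qed
    moreover have "cinner n (w k) phi0 * cis (\<theta> k) = cinner n (w k) phi0"
      by (rule eigen_coeff[OF orth eig fU k])
    ultimately have "cinner n (w k) phi0 = 0" by (metis mult.right_neutral mult_cancel_left)
    thus ?thesis by simp
  qed
  have "(\<Sum>k<n. (cmod (cinner n (w k) phi0))\<^sup>2 * pmf (est (\<theta> k)) 0 ^ m)
      = (\<Sum>k<n. (cmod (cinner n (w k) phi0))\<^sup>2)"
    by (intro sum.cong) (auto simp: trm)
  thus ?thesis unfolding main_detect_accept_def detect_accept_def pp
    using z' parseval[OF orth, of phi0] by simp
qed

lemma part1:
  assumes U: "unitary_mat n U2" and fx: "\<forall>i<n. mat_vec n U2 phi0 i = phi0 i"
    and uniq: "\<forall>v. (\<forall>i<n. mat_vec n U2 v i = v i) \<longrightarrow> (\<exists>a. \<forall>i<n. v i = a * phi0 i)"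
    and mu: "cnorm2 n mu = 1" and phin: "cnorm2 n phi0 = 1"
    and nz: "cinner n phi0 mu \<noteq> 0"
    and ob: "orthonormal_eigenbasis n (mat_mult n U2 (reflection mu)) w \<theta>"
    and e: "0 < \<epsilon>" and T: "T \<ge> max 1 (QHT n U2 mu phi0 w \<theta> \<epsilon>)"
    and ve: "valid_estimate (1 / T) est" and pm: "(1/3::real) ^ m \<le> \<epsilon>"
  shows "main_detect_accept n mu w \<theta> est m phi0 \<ge> 1 - 2 * \<epsilon>"
proof -
  from ob have orth: "\<forall>k<n. \<forall>l<n. cinner n (w k) (w l) = (if k = l then 1 else 0)"
    and eig: "\<forall>k<n. \<forall>i<n. mat_vec n (mat_mult n U2 (reflection mu)) (w k) i = cis (\<theta> k) * w k i"
    and th: "\<forall>k<n. -pi < \<theta> k \<and> \<theta> k \<le> pi"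
    unfolding orthonormal_eigenbasis_def by auto
  define v where "v = perp_part n mu phi0"
  define c where "c k = (cmod (cinner n (w k) v))\<^sup>2" for k
  have c0: "\<And>k. c k \<ge> 0" by (simp add: c_def)
  have nv: "cnorm2 n v = 1 - (cmod (cinner n mu phi0))\<^sup>2"
    using perp_norm[OF mu, of phi0] phin by (simp add: v_def)
  have par: "cnorm2 n v = (\<Sum>k<n. c k)" using parseval[OF orth, of v] by (simp add: c_def)
  have T1: "T \<ge> 1" using T by simp
  have tail: "(\<Sum>k<n. if QH_val (\<theta> k) > T then c k else 0) \<le> \<epsilon>"
  proof -
    have qt: "QH_tail n U2 mu phi0 w \<theta> = (\<lambda>y. \<Sum>k<n. if QH_val (\<theta> k) > y then c k else 0)"
      unfolding QH_tail_def c_def v_def by simp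
    have "T \<ge> Inf {y. 0 \<le> y \<and> (\<Sum>k<n. if QH_val (\<theta> k) > y then c k else 0) \<le> \<epsilon>}"
      using T unfolding QHT_def qt by simp
    thus ?thesis using tail_le[where p=c and q="\<lambda>k. QH_val (\<theta> k)" and T=T and n=n and \<epsilon>=\<epsilon>] e c0
      by simp
  qed
  have bound: "c k * pmf (est (\<theta> k)) 0 ^ m \<le> (if QH_val (\<theta> k) > T then c k else 0) + \<epsilon> * c k"
    if k: "k < n" for k
  proof -
    have p0: "0 \<le> pmf (est (\<theta> k)) 0" by simp
    have p1: "pmf (est (\<theta> k)) 0 \<le> 1" by (rule pmf_le_1)
    have pm1: "pmf (est (\<theta> k)) 0 ^ m \<le> 1" using p0 p1 by (rule power_le_one)
    show ?thesis
    proof (cases "QH_val (\<theta> k) > T")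
      case True
      have "c k * pmf (est (\<theta> k)) 0 ^ m \<le> c k" using pm1 c0[of k] by (simp add: mult_left_le)
      moreover have "0 \<le> \<epsilon> * c k" using e c0[of k] by simp
      ultimately show ?thesis using True by simp
    next
      case False
      have tnz: "\<theta> k \<noteq> 0"
      proof
        assume t0: "\<theta> k = 0"
        show False
        proof (rule no_one_eig[OF U fx uniq nz])
          show "cinner n (w k) (w k) = 1" using orth k by simp
          show "\<forall>i<n. mat_vec n (mat_mult n U2 (reflection mu)) (w k) i = w k i"
            using eig k t0 by simp
        qed
      qed
      hence "1 / \<bar>\<theta> k\<bar> \<le> T" using False by (simp add: QH_val_def)
      hence "1 / T \<le> \<bar>\<theta> k\<bar>" using tnz T1 by (simp add: field_simps)
      hence "pmf (est (\<theta> k)) 0 \<le> 1/3" using est_small[OF ve] th k by auto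
      hence "pmf (est (\<theta> k)) 0 ^ m \<le> (1/3) ^ m" using p0 by (intro power_mono) auto
      hence "pmf (est (\<theta> k)) 0 ^ m \<le> \<epsilon>" using pm by simp
      hence "c k * pmf (est (\<theta> k)) 0 ^ m \<le> c k * \<epsilon>" using c0[of k] by (intro mult_left_mono) auto
      thus ?thesis using False by (simp add: mult.commute)
    qed
  qed
  have "(\<Sum>k<n. c k * pmf (est (\<theta> k)) 0 ^ m)
      \<le> (\<Sum>k<n. (if QH_val (\<theta> k) > T then c k else 0) + \<epsilon> * c k)"
    using bound by (intro sum_mono) auto
  also have "\<dots> = (\<Sum>k<n. if QH_val (\<theta> k) > T then c k else 0) + \<epsilon> * cnorm2 n v"
    by (simp add: sum.distrib sum_distrib_left par)
  also have "\<dots> \<le> \<epsilon> + \<epsilon> * 1"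
    using tail nv e by (intro add_mono mult_left_mono) auto
  finally have S: "(\<Sum>k<n. c k * pmf (est (\<theta> k)) 0 ^ m) \<le> 2 * \<epsilon>" by simp
  have "main_detect_accept n mu w \<theta> est m phi0
      = (cmod (cinner n mu phi0))\<^sup>2 + cnorm2 n v - (\<Sum>k<n. c k * pmf (est (\<theta> k)) 0 ^ m)"
    by (simp add: main_detect_accept_def detect_accept_def v_def c_def)
  thus ?thesis using S nv by simp
qed

theorem corollary1:
  "\<exists>c0>0. \<forall>c\<ge>c0. \<exists>C. \<forall>(n::nat) U2 mu phi0 (\<epsilon>::real) (T::real) w \<theta> est.
     unitary_mat n U2 \<and> real_mat n U2 \<and>
     real_vec n phi0 \<and> cnorm2 n phi0 = 1 \<and> (\<forall>i<n. mat_vec n U2 phi0 i = phi0 i) \<and>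
     (\<forall>v. (\<forall>i<n. mat_vec n U2 v i = v i) \<longrightarrow> (\<exists>a. \<forall>i<n. v i = a * phi0 i)) \<and>
     real_vec n mu \<and> cnorm2 n mu = 1 \<and>
     orthonormal_eigenbasis n (mat_mult n U2 (reflection mu)) w \<theta> \<and>
     0 < \<epsilon> \<and> \<epsilon> < 1 \<and>
     T \<ge> max 1 (QHT n U2 mu phi0 w \<theta> \<epsilon>) \<and>
     valid_estimate (1 / T) est
     \<longrightarrow>
     (let acc = main_detect_accept n mu w \<theta> est (nat \<lceil>c * ln (1 / \<epsilon>)\<rceil>) phi0 in
       (cinner n phi0 mu \<noteq> 0 \<longrightarrow> acc \<ge> 1 - C * \<epsilon>) \<and>
       (cinner n phi0 mu = 0 \<longrightarrow> acc = 0))"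
proof (rule exI[of _ "1::real"], intro conjI allI impI)
  show "(0::real) < 1" by simp
  fix c :: real assume c: "1 \<le> c"
  show "\<exists>C. \<forall>(n::nat) U2 mu phi0 (\<epsilon>::real) (T::real) w \<theta> est.
     unitary_mat n U2 \<and> real_mat n U2 \<and>
     real_vec n phi0 \<and> cnorm2 n phi0 = 1 \<and> (\<forall>i<n. mat_vec n U2 phi0 i = phi0 i) \<and>
     (\<forall>v. (\<forall>i<n. mat_vec n U2 v i = v i) \<longrightarrow> (\<exists>a. \<forall>i<n. v i = a * phi0 i)) \<and>
     real_vec n mu \<and> cnorm2 n mu = 1 \<and>
     orthonormal_eigenbasis n (mat_mult n U2 (reflection mu)) w \<theta> \<and>
     0 < \<epsilon> \<and> \<epsilon> < 1 \<and>
     T \<ge> max 1 (QHT n U2 mu phi0 w \<theta> \<epsilon>) \<and>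
     valid_estimate (1 / T) est
     \<longrightarrow>
     (let acc = main_detect_accept n mu w \<theta> est (nat \<lceil>c * ln (1 / \<epsilon>)\<rceil>) phi0 in
       (cinner n phi0 mu \<noteq> 0 \<longrightarrow> acc \<ge> 1 - C * \<epsilon>) \<and>
       (cinner n phi0 mu = 0 \<longrightarrow> acc = 0))"
  proof (rule exI[of _ "2::real"], intro allI impI)
    fix n U2 mu phi0 \<epsilon> T w \<theta> est
    assume H: "unitary_mat n U2 \<and> real_mat n U2 \<and>
     real_vec n phi0 \<and> cnorm2 n phi0 = 1 \<and> (\<forall>i<n. mat_vec n U2 phi0 i = phi0 i) \<and>
     (\<forall>v. (\<forall>i<n. mat_vec n U2 v i = v i) \<longrightarrow> (\<exists>a. \<forall>i<n. v i = a * phi0 i)) \<and>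
     real_vec n mu \<and> cnorm2 n mu = 1 \<and>
     orthonormal_eigenbasis n (mat_mult n U2 (reflection mu)) w \<theta> \<and>
     0 < (\<epsilon>::real) \<and> \<epsilon> < 1 \<and>
     T \<ge> max 1 (QHT n U2 mu phi0 w \<theta> \<epsilon>) \<and>
     valid_estimate (1 / T) est"
    have pm: "(1/3::real) ^ (nat \<lceil>c * ln (1 / \<epsilon>)\<rceil>) \<le> \<epsilon>" using pow_small[OF c] H by auto
    have e0: "est 0 = return_pmf 0" using H by (simp add: valid_estimate_def)
    show "let acc = main_detect_accept n mu w \<theta> est (nat \<lceil>c * ln (1 / \<epsilon>)\<rceil>) phi0 in
       (cinner n phi0 mu \<noteq> 0 \<longrightarrow> acc \<ge> 1 - 2 * \<epsilon>) \<and>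
       (cinner n phi0 mu = 0 \<longrightarrow> acc = 0)"
      unfolding Let_def
    proof (intro conjI impI)
      assume "cinner n phi0 mu \<noteq> 0"
      thus "main_detect_accept n mu w \<theta> est (nat \<lceil>c * ln (1 / \<epsilon>)\<rceil>) phi0 \<ge> 1 - 2 * \<epsilon>"
        using part1[of n U2 phi0 mu w \<theta> \<epsilon> T est] H pm by blast
    next
      assume "cinner n phi0 mu = 0"
      thus "main_detect_accept n mu w \<theta> est (nat \<lceil>c * ln (1 / \<epsilon>)\<rceil>) phi0 = 0"
        using part2[of n U2 mu w \<theta> phi0 est] H e0 by blast
    qed
  qed
qed

end
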